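(* Let $P=(P_t)_{t\ge0}$ be a $C_0$-semigroup on $(C_\kappa(E),\tau_\kappa^{\mathscr M})$ consisting of convex increasing (not necessarily linear) operators, with generator $(L,D(L))$. Then for every $\varphi\in C_\kappa(E)$ the function $u\colon[0,\infty)\to C_\kappa(E)$, $u(t):=P_t\varphi$, is a $D(L)$-viscosity solution of $u'(t)=Lu(t)$ for $t>0$, with $u(0)=\varphi$.
   Context: Standing assumptions and notation. $E$ is a completely regular Hausdorff topological space such that (1) every compact subset of $E$ is metrizable, (2) the Borel $\sigma$-algebra $\mathscr B(E)$ equals the Baire $\sigma$-algebra of $E$, and (3) a function $\varphi\colon E\to\mathbb R$ is continuous if and only if its restriction to every compact subset of $E$ is continuous. $\kappa\colon E\to(0,\infty)$ is a continuous weight function. $C_\kappa(E)$ denotes the space of continuous $\varphi\colon E\to\mathbb R$ with $\|\varphi\|_\kappa:=\sup_{x\in E}|\kappa(x)\varphi(x)|<\infty$. For a sequence $(C_n)$ of compact subsets of $E$ and positive reals $a_n\to0$ let $p_{\kappa,(C_n),(a_n)}(\varphi):=\sup_{n}a_n\sup_{x\in C_n}|\kappa(x)\varphi(x)|$; the mixed topology $\tau_\kappa^{\mathscr M}$ is the locally convex topology on $C_\kappa(E)$ generated by these seminorms. A family $P=(P_t)_{t\ge0}$ of maps $C_\kappa(E)\to C_\kappa(E)$ is a semigroup if $P_0\varphi=\varphi$ and $P_sP_t\varphi=P_{s+t}\varphi$. It is a $C_0$-semigroup on $(C_\kappa(E),\tau_\kappa^{\mathscr M})$ if moreover (iii) for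 every $T\ge0$, $\varepsilon>0$ and every seminorm $p_{\kappa,(K_n),(a_n)}$ there exist a seminorm $p_{\kappa,(C_n),(b_n)}$ and $\delta>0$ such that $p_{\kappa,(K_n),(a_n)}(P_t\varphi_1-P_t\varphi_2)<\varepsilon$ for all $t\in[0,T]$ and all $\varphi_1,\varphi_2$ with $p_{\kappa,(C_n),(b_n)}(\varphi_1-\varphi_2)<\delta$; and (iv) $\lim_{t\to0}p_{\kappa,(K_n),(a_n)}(P_t\varphi-\varphi)=0$ for every $\varphi$ and seminorm. Its generator $L$: $D(L)$ is the set of $\varphi$ for which $\tau_\kappa^{\mathscr M}\text{-}\lim_{t\to0}(P_t\varphi-\varphi)/t$ exists, and $L\varphi$ is this limit. An operator $T$ on $C_\kappa(E)$ is increasing if $\varphi_1\le\varphi_2$ implies $T\varphi_1\le T\varphi_2$, and convex if $T(\lambda\varphi_1+(1-\lambda)\varphi_2)\le\lambda T\varphi_1+(1-\lambda)T\varphi_2$ for $\lambda\in[0,1]$. Viscosity solutions: for $L\colon D\to C_\kappa(E)$ with $D\subset C_\kappa(E)$ nonempty, a $\tau_\kappa^{\mathscr M}$-continuous $u\colon[0,\infty)\to C_\kappa(E)$ is a $D$-viscosity subsolution of $u'=Lu$ if for every $t>0$, $x\in E$ and every ($\tau_\kappa^{\mathscr M}$-)differentiable $\psi\colon(0,\infty)\to C_\kappa(E)$ with $\psi(t)\in D$, $\psi(t)(x)=u(t)(x)$ and $\psi(s)\ge u(s)$ for all $s>0$, one has $\psi'(t)(x)\le(L\psi(t))(x)$;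 supersolution analogously with $\psi(s)\le u(s)$ for all $s>0$ and $\psi'(t)(x)\ge(L\psi(t))(x)$; a viscosity solution is both. *)

theory Defs
  imports "HOL-Analysis.Analysis" "HOL-Probability.Probability"
begin

text \<open>The underlying space E is the type 'a with its topology (topspace = UNIV).\<close>

definition baire_sets :: "'a::topological_space set set" where
  "baire_sets = sigma_sets UNIV {f -` {0} | f :: 'a \<Rightarrow> real. continuous_on UNIV f}"

definition standing_space :: "'a::topological_space itself \<Rightarrow> bool" where
  "standing_space _ \<longleftrightarrow>
     completely_regular_space (euclidean :: 'a topology) \<and>
     Hausdorff_space (euclidean :: 'a topology) \<and>
     (\<forall>K :: 'a set. compact K \<longrightarrow> metrizable_space (subtopology euclidean K)) \<and>
     sets (borel :: 'a measure) = baire_sets \<and>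
     (\<forall>f :: 'a \<Rightarrow> real. continuous_on UNIV f \<longleftrightarrow> (\<forall>K. compact K \<longrightarrow> continuous_on K f))"

definition weight :: "('a::topological_space \<Rightarrow> real) \<Rightarrow> bool" where
  "weight \<kappa> \<longleftrightarrow> continuous_on UNIV \<kappa> \<and> (\<forall>x. \<kappa> x > 0)"

definition Ck :: "('a::topological_space \<Rightarrow> real) \<Rightarrow> ('a \<Rightarrow> real) set" where
  "Ck \<kappa> = {\<phi>. continuous_on UNIV \<phi> \<and> (\<exists>M. \<forall>x. \<bar>\<kappa> x * \<phi> x\<bar> \<le> M)}"

definition admissible :: "(nat \<Rightarrow> 'a::topological_space set) \<Rightarrow> (nat \<Rightarrow> real) \<Rightarrow> bool" where
  "admissible C a \<longleftrightarrow> (\<forall>n. compact (C n)) \<and> (\<forall>n. a n > 0) \<and> a \<longlonglongrightarrow> 0"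

text \<open>The seminorm p_{kappa,(C_n),(a_n)}; all quantities are nonnegative, so inserting 0
  only fixes the value of suprema over empty sets.\<close>
definition pmix :: "('a \<Rightarrow> real) \<Rightarrow> (nat \<Rightarrow> 'a set) \<Rightarrow> (nat \<Rightarrow> real) \<Rightarrow> ('a \<Rightarrow> real) \<Rightarrow> real" where
  "pmix \<kappa> C a \<phi> = Sup (insert 0 {a n * Sup (insert 0 ((\<lambda>x. \<bar>\<kappa> x * \<phi> x\<bar>) ` C n)) | n. True})"

definition mixed_tendsto :: "('a::topological_space \<Rightarrow> real) \<Rightarrow> ('b \<Rightarrow> 'a \<Rightarrow> real) \<Rightarrow> ('a \<Rightarrow> real) \<Rightarrow> 'b filter \<Rightarrow> bool" where
  "mixed_tendsto \<kappa> f g F \<longleftrightarrow>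
     (\<forall>C a. admissible C a \<longrightarrow> ((\<lambda>s. pmix \<kappa> C a (\<lambda>x. f s x - g x)) \<longlongrightarrow> 0) F)"

definition C0_semigroup :: "('a::topological_space \<Rightarrow> real) \<Rightarrow> (real \<Rightarrow> ('a \<Rightarrow> real) \<Rightarrow> ('a \<Rightarrow> real)) \<Rightarrow> bool" where
  "C0_semigroup \<kappa> P \<longleftrightarrow>
     (\<forall>t\<ge>0. \<forall>\<phi>\<in>Ck \<kappa>. P t \<phi> \<in> Ck \<kappa>) \<and>
     (\<forall>\<phi>\<in>Ck \<kappa>. P 0 \<phi> = \<phi>) \<and>
     (\<forall>s\<ge>0. \<forall>t\<ge>0. \<forall>\<phi>\<in>Ck \<kappa>. P s (P t \<phi>) = P (s + t) \<phi>) \<and>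
     (\<forall>T\<ge>0. \<forall>\<epsilon>>0. \<forall>K a. admissible K a \<longrightarrow>
        (\<exists>C b \<delta>. admissible C b \<and> \<delta> > 0 \<and>
           (\<forall>t\<in>{0..T}. \<forall>\<phi>1\<in>Ck \<kappa>. \<forall>\<phi>2\<in>Ck \<kappa>.
              pmix \<kappa> C b (\<lambda>x. \<phi>1 x - \<phi>2 x) < \<delta> \<longrightarrow>
              pmix \<kappa> K a (\<lambda>x. P t \<phi>1 x - P t \<phi>2 x) < \<epsilon>))) \<and>
     (\<forall>\<phi>\<in>Ck \<kappa>. \<forall>K a. admissible K a \<longrightarrow>
        ((\<lambda>t. pmix \<kappa> K a (\<lambda>x. P t \<phi> x - \<phi> x)) \<longlongrightarrow> 0) (at_right 0))"

definition increasing_op :: "('a \<Rightarrow> real) set \<Rightarrow> (('a \<Rightarrow> real) \<Rightarrow> ('a \<Rightarrow> real)) \<Rightarrow> bool" where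
  "increasing_op S T \<longleftrightarrow> (\<forall>\<phi>1\<in>S. \<forall>\<phi>2\<in>S. (\<forall>x. \<phi>1 x \<le> \<phi>2 x) \<longrightarrow> (\<forall>x. T \<phi>1 x \<le> T \<phi>2 x))"

definition convex_op :: "('a \<Rightarrow> real) set \<Rightarrow> (('a \<Rightarrow> real) \<Rightarrow> ('a \<Rightarrow> real)) \<Rightarrow> bool" where
  "convex_op S T \<longleftrightarrow> (\<forall>\<phi>1\<in>S. \<forall>\<phi>2\<in>S. \<forall>c::real. 0 \<le> c \<and> c \<le> 1 \<longrightarrow>
     (\<forall>x. T (\<lambda>y. c * \<phi>1 y + (1 - c) * \<phi>2 y) x \<le> c * T \<phi>1 x + (1 - c) * T \<phi>2 x))"

definition gen_has :: "('a::topological_space \<Rightarrow> real) \<Rightarrow> (real \<Rightarrow> ('a \<Rightarrow> real) \<Rightarrow> ('a \<Rightarrow> real)) \<Rightarrow> ('a \<Rightarrow> real) \<Rightarrow> ('a \<Rightarrow> real) \<Rightarrow> bool" where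
  "gen_has \<kappa> P \<phi> \<psi> \<longleftrightarrow> \<psi> \<in> Ck \<kappa> \<and>
     mixed_tendsto \<kappa> (\<lambda>t x. (P t \<phi> x - \<phi> x) / t) \<psi> (at_right 0)"

definition gen_dom :: "('a::topological_space \<Rightarrow> real) \<Rightarrow> (real \<Rightarrow> ('a \<Rightarrow> real) \<Rightarrow> ('a \<Rightarrow> real)) \<Rightarrow> ('a \<Rightarrow> real) set" where
  "gen_dom \<kappa> P = {\<phi> \<in> Ck \<kappa>. \<exists>\<psi>. gen_has \<kappa> P \<phi> \<psi>}"

definition gen :: "('a::topological_space \<Rightarrow> real) \<Rightarrow> (real \<Rightarrow> ('a \<Rightarrow> real) \<Rightarrow> ('a \<Rightarrow> real)) \<Rightarrow> ('a \<Rightarrow> real) \<Rightarrow> ('a \<Rightarrow> real)" where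
  "gen \<kappa> P \<phi> = (THE \<psi>. gen_has \<kappa> P \<phi> \<psi>)"

definition mixed_has_derivative :: "('a::topological_space \<Rightarrow> real) \<Rightarrow> (real \<Rightarrow> 'a \<Rightarrow> real) \<Rightarrow> ('a \<Rightarrow> real) \<Rightarrow> real \<Rightarrow> bool" where
  "mixed_has_derivative \<kappa> \<psi> d t \<longleftrightarrow> d \<in> Ck \<kappa> \<and>
     mixed_tendsto \<kappa> (\<lambda>s x. (\<psi> s x - \<psi> t x) / (s - t)) d (at t within {0<..})"

definition mixed_continuous :: "('a::topological_space \<Rightarrow> real) \<Rightarrow> (real \<Rightarrow> 'a \<Rightarrow> real) \<Rightarrow> bool" where
  "mixed_continuous \<kappa> u \<longleftrightarrow> (\<forall>t\<ge>0. u t \<in> Ck \<kappa>) \<and>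
     (\<forall>t\<ge>0. mixed_tendsto \<kappa> u (u t) (at t within {0..}))"

definition visc_sub :: "('a::topological_space \<Rightarrow> real) \<Rightarrow> ('a \<Rightarrow> real) set \<Rightarrow> (('a \<Rightarrow> real) \<Rightarrow> ('a \<Rightarrow> real)) \<Rightarrow> (real \<Rightarrow> 'a \<Rightarrow> real) \<Rightarrow> bool" where
  "visc_sub \<kappa> D L u \<longleftrightarrow> mixed_continuous \<kappa> u \<and>
     (\<forall>t>0. \<forall>x. \<forall>\<psi> \<psi>'. (\<forall>s>0. \<psi> s \<in> Ck \<kappa> \<and> mixed_has_derivative \<kappa> \<psi> (\<psi>' s) s) \<longrightarrow>
        \<psi> t \<in> D \<longrightarrow> \<psi> t x = u t x \<longrightarrow> (\<forall>s>0. \<forall>y. \<psi> s y \<ge> u s y) \<longrightarrow>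
        \<psi>' t x \<le> L (\<psi> t) x)"

definition visc_super :: "('a::topological_space \<Rightarrow> real) \<Rightarrow> ('a \<Rightarrow> real) set \<Rightarrow> (('a \<Rightarrow> real) \<Rightarrow> ('a \<Rightarrow> real)) \<Rightarrow> (real \<Rightarrow> 'a \<Rightarrow> real) \<Rightarrow> bool" where
  "visc_super \<kappa> D L u \<longleftrightarrow> mixed_continuous \<kappa> u \<and>
     (\<forall>t>0. \<forall>x. \<forall>\<psi> \<psi>'. (\<forall>s>0. \<psi> s \<in> Ck \<kappa> \<and> mixed_has_derivative \<kappa> \<psi> (\<psi>' s) s) \<longrightarrow>
        \<psi> t \<in> D \<longrightarrow> \<psi> t x = u t x \<longrightarrow> (\<forall>s>0. \<forall>y. \<psi> s y \<le> u s y) \<longrightarrow>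
        \<psi>' t x \<ge> L (\<psi> t) x)"

definition visc_sol where
  "visc_sol \<kappa> D L u \<longleftrightarrow> visc_sub \<kappa> D L u \<and> visc_super \<kappa> D L u"

end

theory Submission
  imports Defs
begin


definition sn :: "('a \<Rightarrow> real) \<Rightarrow> (nat \<Rightarrow> 'a set) \<Rightarrow> ('a \<Rightarrow> real) \<Rightarrow> nat \<Rightarrow> real" where
  "sn \<kappa> C f n = Sup (insert 0 ((\<lambda>x. \<bar>\<kappa> x * f x\<bar>) ` C n))"

definition bnd :: "('a \<Rightarrow> real) \<Rightarrow> ('a \<Rightarrow> real) \<Rightarrow> bool" where
  "bnd \<kappa> f \<longleftrightarrow> (\<exists>M. \<forall>y. \<bar>\<kappa> y * f y\<bar> \<le> M)"

lemma pmix_sn: "pmix \<kappa> C a f = Sup (insert 0 (range (\<lambda>n. a n * sn \<kappa> C f n)))"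
  unfolding pmix_def sn_def by (simp add: full_SetCompr_eq[symmetric])

lemma sn_le: "(\<And>y. y \<in> C n \<Longrightarrow> \<bar>\<kappa> y * f y\<bar> \<le> B) \<Longrightarrow> 0 \<le> B \<Longrightarrow> sn \<kappa> C f n \<le> B"
  unfolding sn_def by (rule cSup_least) auto

lemma sn_bdd: "bnd \<kappa> f \<Longrightarrow> bdd_above (insert 0 ((\<lambda>x. \<bar>\<kappa> x * f x\<bar>) ` C n))"
proof -
  assume "bnd \<kappa> f"
  then obtain M where M: "\<And>y. \<bar>\<kappa> y * f y\<bar> \<le> M" unfolding bnd_def by blast
  show ?thesis by (rule bdd_aboveI[of _ "max 0 M"]) (auto simp: M le_max_iff_disj)
qed

lemma sn_ge: "bnd \<kappa> f \<Longrightarrow> y \<in> C n \<Longrightarrow> \<bar>\<kappa> y * f y\<bar> \<le> sn \<kappa> C f n"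
  unfolding sn_def by (rule cSup_upper[OF _ sn_bdd]) auto

lemma sn_nonneg: "bnd \<kappa> f \<Longrightarrow> 0 \<le> sn \<kappa> C f n"
  unfolding sn_def by (rule cSup_upper[OF _ sn_bdd]) auto

lemma sn_bound: assumes "bnd \<kappa> f" obtains M where "M \<ge> 0" "\<And>n. sn \<kappa> C f n \<le> M"
proof -
  obtain M where M: "\<And>y. \<bar>\<kappa> y * f y\<bar> \<le> M" using assms unfolding bnd_def by blast
  have "M \<ge> 0" using M[of undefined] by linarith
  show ?thesis
  proof (rule that[of M])
    show "M \<ge> 0" by fact
    fix n show "sn \<kappa> C f n \<le> M" by (rule sn_le[OF M \<open>M \<ge> 0\<close>])
  qed
qed

lemma adm_bound: assumes "admissible C a" obtains K where "K > 0" "\<And>n. a n \<le> K"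
proof -
  have "a \<longlonglongrightarrow> 0" using assms unfolding admissible_def by blast
  then have "Bseq a" by (rule convergent_imp_Bseq[OF convergentI])
  then obtain K where K: "K > 0" "\<forall>n. norm (a n) \<le> K" by (rule BseqE)
  show ?thesis
  proof (rule that[of K])
    show "K > 0" by (rule K(1))
    fix n have "a n \<le> norm (a n)" by simp
    then show "a n \<le> K" using K(2) by (blast intro: order_trans)
  qed
qed

lemma pmix_bdd: assumes "admissible C a" "bnd \<kappa> f"
  shows "bdd_above (insert 0 (range (\<lambda>n. a n * sn \<kappa> C f n)))"
proof -
  obtain K where K: "K > 0" "\<And>n. a n \<le> K" using adm_bound assms(1) by blast
  obtain M where M: "M \<ge> 0" "\<And>n. sn \<kappa> C f n \<le> M" using sn_bound assms(2) by blast
  have "a n * sn \<kappa> C f n \<le> K * M" for n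
    by (rule mult_mono[OF K(2) M(2)]) (use K sn_nonneg[OF assms(2)] in auto)
  moreover have "0 \<le> K * M" using K M by simp
  ultimately show ?thesis by (intro bdd_aboveI[of _ "K * M"]) auto
qed

lemma pmix_ge: "admissible C a \<Longrightarrow> bnd \<kappa> f \<Longrightarrow> a n * sn \<kappa> C f n \<le> pmix \<kappa> C a f"
  unfolding pmix_sn by (rule cSup_upper[OF _ pmix_bdd]) auto

lemma pmix_nonneg: "admissible C a \<Longrightarrow> bnd \<kappa> f \<Longrightarrow> 0 \<le> pmix \<kappa> C a f"
  unfolding pmix_sn by (rule cSup_upper[OF _ pmix_bdd]) auto

lemma pmix_le: "(\<And>n. a n * sn \<kappa> C f n \<le> B) \<Longrightarrow> 0 \<le> B \<Longrightarrow> pmix \<kappa> C a f \<le> B"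
  unfolding pmix_sn by (rule cSup_least) auto

lemma pmix_cong: "(\<And>y. \<bar>\<kappa> y * f y\<bar> = \<bar>\<kappa> y * g y\<bar>) \<Longrightarrow> pmix \<kappa> C a f = pmix \<kappa> C a g"
  unfolding pmix_def by simp

lemma abs_tri: "\<bar>(k::real) * (a + b)\<bar> \<le> \<bar>k * a\<bar> + \<bar>k * b\<bar>"
  unfolding distrib_left by (rule abs_triangle_ineq)

lemma abs_tri2: "\<bar>(k::real) * a\<bar> \<le> A \<Longrightarrow> \<bar>k * b\<bar> \<le> B \<Longrightarrow> \<bar>k * (a + b)\<bar> \<le> A + B"
  by (rule order_trans[OF abs_tri add_mono])

lemma bnd_add: "bnd \<kappa> f \<Longrightarrow> bnd \<kappa> g \<Longrightarrow> bnd \<kappa> (\<lambda>y. f y + g y)"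
  unfolding bnd_def
proof (elim exE)
  fix M1 M2 assume "\<forall>y. \<bar>\<kappa> y * f y\<bar> \<le> M1" "\<forall>y. \<bar>\<kappa> y * g y\<bar> \<le> M2"
  then have "\<bar>\<kappa> y * (f y + g y)\<bar> \<le> M1 + M2" for y
    by (intro abs_tri2) auto
  then show "\<exists>M. \<forall>y. \<bar>\<kappa> y * (f y + g y)\<bar> \<le> M" by blast
qed

lemma bnd_cmult: "bnd \<kappa> f \<Longrightarrow> bnd \<kappa> (\<lambda>y. c * f y)"
  unfolding bnd_def
proof (elim exE)
  fix M assume M: "\<forall>y. \<bar>\<kappa> y * f y\<bar> \<le> M"
  have "\<bar>\<kappa> y * (c * f y)\<bar> \<le> \<bar>c\<bar> * M" for y
  proof -
    have "\<bar>\<kappa> y * (c * f y)\<bar> = \<bar>c\<bar> * \<bar>\<kappa> y * f y\<bar>" by (simp add: abs_mult)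
    also have "\<dots> \<le> \<bar>c\<bar> * M" using M by (simp add: mult_left_mono)
    finally show ?thesis .
  qed
  then show "\<exists>M. \<forall>y. \<bar>\<kappa> y * (c * f y)\<bar> \<le> M" by blast
qed

lemma pmix_triangle:
  assumes "admissible C a" "bnd \<kappa> f" "bnd \<kappa> g"
  shows "pmix \<kappa> C a (\<lambda>y. f y + g y) \<le> pmix \<kappa> C a f + pmix \<kappa> C a g"
proof (rule pmix_le)
  fix n
  have ineq: "sn \<kappa> C (\<lambda>y. f y + g y) n \<le> sn \<kappa> C f n + sn \<kappa> C g n"
  proof (rule sn_le)
    fix y assume y: "y \<in> C n"
    have "\<bar>\<kappa> y * f y\<bar> \<le> sn \<kappa> C f n" by (rule sn_ge[where C=C and n=n, OF assms(2) y])
    moreover have "\<bar>\<kappa> y * g y\<bar> \<le> sn \<kappa> C g n" by (rule sn_ge[where C=C and n=n, OF assms(3) y])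
    ultimately show "\<bar>\<kappa> y * (f y + g y)\<bar> \<le> sn \<kappa> C f n + sn \<kappa> C g n"
      by (rule abs_tri2)
  next
    show "0 \<le> sn \<kappa> C f n + sn \<kappa> C g n"
      using sn_nonneg[OF assms(2)] sn_nonneg[OF assms(3)] by (rule add_nonneg_nonneg)
  qed
  have an: "a n > 0" using assms unfolding admissible_def by blast
  have "a n * sn \<kappa> C (\<lambda>y. f y + g y) n \<le> a n * (sn \<kappa> C f n + sn \<kappa> C g n)"
    by (rule mult_left_mono[OF ineq]) (use an in simp)
  also have "\<dots> = a n * sn \<kappa> C f n + a n * sn \<kappa> C g n" by (rule distrib_left)
  also have "\<dots> \<le> pmix \<kappa> C a f + pmix \<kappa> C a g"
    by (rule add_mono[OF pmix_ge[OF assms(1,2)] pmix_ge[OF assms(1,3)]])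
  finally show "a n * sn \<kappa> C (\<lambda>y. f y + g y) n \<le> pmix \<kappa> C a f + pmix \<kappa> C a g" .
next
  show "0 \<le> pmix \<kappa> C a f + pmix \<kappa> C a g"
    using pmix_nonneg[OF assms(1,2)] pmix_nonneg[OF assms(1,3)] by (rule add_nonneg_nonneg)
qed

lemma pmix_cmult:
  assumes "admissible C a" "bnd \<kappa> f"
  shows "pmix \<kappa> C a (\<lambda>y. c * f y) \<le> \<bar>c\<bar> * pmix \<kappa> C a f"
proof (rule pmix_le)
  fix n
  have ineq: "sn \<kappa> C (\<lambda>y. c * f y) n \<le> \<bar>c\<bar> * sn \<kappa> C f n"
  proof (rule sn_le)
    fix y assume y: "y \<in> C n"
    have "\<bar>\<kappa> y * f y\<bar> \<le> sn \<kappa> C f n" by (rule sn_ge[where C=C and n=n, OF assms(2) y])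
    then have "\<bar>c\<bar> * \<bar>\<kappa> y * f y\<bar> \<le> \<bar>c\<bar> * sn \<kappa> C f n" by (rule mult_left_mono) simp
    moreover have "\<bar>\<kappa> y * (c * f y)\<bar> = \<bar>c\<bar> * \<bar>\<kappa> y * f y\<bar>" by (simp add: abs_mult)
    ultimately show "\<bar>\<kappa> y * (c * f y)\<bar> \<le> \<bar>c\<bar> * sn \<kappa> C f n" by simp
  next
    show "0 \<le> \<bar>c\<bar> * sn \<kappa> C f n" using sn_nonneg[OF assms(2)] by simp
  qed
  have an: "a n > 0" using assms unfolding admissible_def by blast
  have "a n * sn \<kappa> C (\<lambda>y. c * f y) n \<le> a n * (\<bar>c\<bar> * sn \<kappa> C f n)"
    by (rule mult_left_mono[OF ineq]) (use an in simp)
  also have "\<dots> = \<bar>c\<bar> * (a n * sn \<kappa> C f n)" by (simp add: algebra_simps)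
  also have "\<dots> \<le> \<bar>c\<bar> * pmix \<kappa> C a f"
    by (rule mult_left_mono[OF pmix_ge[OF assms(1,2)]]) simp
  finally show "a n * sn \<kappa> C (\<lambda>y. c * f y) n \<le> \<bar>c\<bar> * pmix \<kappa> C a f" .
next
  show "0 \<le> \<bar>c\<bar> * pmix \<kappa> C a f" using pmix_nonneg[OF assms(1,2)] by simp
qed

lemma adm_single: "admissible (\<lambda>n. {x}) (\<lambda>n. 1 / real (Suc n))"
  unfolding admissible_def using LIMSEQ_inverse_real_of_nat by (simp add: inverse_eq_divide)

lemma pmix_single: "pmix \<kappa> (\<lambda>n. {x}) (\<lambda>n. 1 / real (Suc n)) f = \<bar>\<kappa> x * f x\<bar>"
proof -
  let ?v = "\<bar>\<kappa> x * f x\<bar>"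
  have s: "Sup (insert 0 ((\<lambda>x. \<bar>\<kappa> x * f x\<bar>) ` {x})) = ?v"
    by (simp add: cSup_insert_If sup_absorb2)
  have m: "?v \<in> insert 0 {1 / real (Suc n) * ?v | n. True}"
    by (rule insertI2, rule CollectI, rule exI[of _ 0]) simp
  have u: "z \<le> ?v" if "z \<in> insert 0 {1 / real (Suc n) * ?v | n. True}" for z
  proof -
    from that have "z = 0 \<or> (\<exists>n. z = 1 / real (Suc n) * ?v)" by blast
    then show ?thesis
    proof
      assume "\<exists>n. z = 1 / real (Suc n) * ?v"
      then obtain n where "z = 1 / real (Suc n) * ?v" by blast
      moreover have "1 / real (Suc n) * ?v \<le> 1 * ?v" by (rule mult_right_mono) simp_all
      ultimately show ?thesis by simp
    qed simp
  qed
  have "Sup (insert 0 {1 / real (Suc n) * ?v | n. True}) = ?v"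
    by (rule cSup_eq_maximum[OF m u])
  then show ?thesis unfolding pmix_def s .
qed



lemma Ck_iff: "f \<in> Ck \<kappa> \<longleftrightarrow> continuous_on UNIV f \<and> bnd \<kappa> f"
  by (simp add: Ck_def bnd_def)

lemma Ck_bnd: "f \<in> Ck \<kappa> \<Longrightarrow> bnd \<kappa> f"
  by (simp add: Ck_iff)

lemma Ck_add: "f \<in> Ck \<kappa> \<Longrightarrow> g \<in> Ck \<kappa> \<Longrightarrow> (\<lambda>y. f y + g y) \<in> Ck \<kappa>"
proof -
  assume a: "f \<in> Ck \<kappa>" "g \<in> Ck \<kappa>"
  then have "continuous_on UNIV (\<lambda>y. f y + g y)" by (intro continuous_on_add) (simp_all add: Ck_iff)
  moreover have "bnd \<kappa> (\<lambda>y. f y + g y)" using a by (intro bnd_add Ck_bnd)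
  ultimately show ?thesis by (simp add: Ck_iff)
qed

lemma Ck_cmult: "f \<in> Ck \<kappa> \<Longrightarrow> (\<lambda>y. c * f y) \<in> Ck \<kappa>"
proof -
  assume a: "f \<in> Ck \<kappa>"
  then have "continuous_on UNIV (\<lambda>y. c * f y)" by (intro continuous_on_mult_left) (simp add: Ck_iff)
  moreover have "bnd \<kappa> (\<lambda>y. c * f y)" using a by (intro bnd_cmult Ck_bnd)
  ultimately show ?thesis by (simp add: Ck_iff)
qed

lemma Ck_diff: "f \<in> Ck \<kappa> \<Longrightarrow> g \<in> Ck \<kappa> \<Longrightarrow> (\<lambda>y. f y - g y) \<in> Ck \<kappa>"
proof -
  assume "f \<in> Ck \<kappa>" "g \<in> Ck \<kappa>"
  then have "(\<lambda>y. f y + (-1) * g y) \<in> Ck \<kappa>" by (rule Ck_add[OF _ Ck_cmult])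
  then show ?thesis by simp
qed

lemma Ck_divide: "f \<in> Ck \<kappa> \<Longrightarrow> (\<lambda>y. f y / c) \<in> Ck \<kappa>"
proof -
  assume "f \<in> Ck \<kappa>"
  then have "(\<lambda>y. (1/c) * f y) \<in> Ck \<kappa>" by (rule Ck_cmult)
  then show ?thesis by simp
qed

lemma pointwise:
  assumes "weight \<kappa>" "mixed_tendsto \<kappa> F g G"
  shows "((\<lambda>s. F s x) \<longlongrightarrow> g x) G"
proof -
  have kx: "\<kappa> x > 0" using assms(1) unfolding weight_def by blast
  have "((\<lambda>s. pmix \<kappa> (\<lambda>n. {x}) (\<lambda>n. 1 / real (Suc n)) (\<lambda>y. F s y - g y)) \<longlongrightarrow> 0) G"
    using assms(2) adm_single unfolding mixed_tendsto_def by blast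
  then have "((\<lambda>s. \<bar>\<kappa> x * (F s x - g x)\<bar>) \<longlongrightarrow> 0) G" by (simp only: pmix_single)
  then have "((\<lambda>s. \<kappa> x * (F s x - g x)) \<longlongrightarrow> 0) G" by (simp only: tendsto_rabs_zero_iff)
  then have "((\<lambda>s. (1 / \<kappa> x) * (\<kappa> x * (F s x - g x))) \<longlongrightarrow> (1 / \<kappa> x) * 0) G"
    by (rule tendsto_mult_left)
  then have "((\<lambda>s. F s x - g x) \<longlongrightarrow> 0) G" using kx by simp
  then show ?thesis by (rule LIM_zero_cancel)
qed

lemma mt_compose:
  fixes \<kappa> :: "'a::topological_space \<Rightarrow> real"
  assumes "mixed_tendsto \<kappa> F g G" "filterlim k G H"
  shows "mixed_tendsto \<kappa> (\<lambda>h. F (k h)) g H"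
  unfolding mixed_tendsto_def
proof (intro allI impI)
  fix C :: "nat \<Rightarrow> 'a set" and a assume adm: "admissible C a"
  have "((\<lambda>s. pmix \<kappa> C a (\<lambda>x. F s x - g x)) \<longlongrightarrow> 0) G"
    using assms(1) adm unfolding mixed_tendsto_def by blast
  from filterlim_compose[OF this assms(2)]
  show "((\<lambda>s. pmix \<kappa> C a (\<lambda>x. F (k s) x - g x)) \<longlongrightarrow> 0) H" .
qed

lemma filt:
  assumes "(t::real) > 0"
  shows "filterlim (\<lambda>h. t - h) (at t within {0<..}) (at_right 0)"
  unfolding filterlim_at
proof
  show "\<forall>\<^sub>F h in at_right 0. t - h \<in> {0<..} \<and> t - h \<noteq> t"
    using eventually_at_right_real[OF assms] by (rule eventually_mono) auto
  have "((\<lambda>h. t - h) \<longlongrightarrow> t - 0) (at_right 0)"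
    by (rule tendsto_diff[OF tendsto_const tendsto_ident_at])
  then show "((\<lambda>h. t - h) \<longlongrightarrow> t) (at_right 0)" by simp
qed

lemma C0_Ck: "C0_semigroup \<kappa> P \<Longrightarrow> t \<ge> 0 \<Longrightarrow> \<phi> \<in> Ck \<kappa> \<Longrightarrow> P t \<phi> \<in> Ck \<kappa>"
  unfolding C0_semigroup_def by blast

lemma C0_semi: "C0_semigroup \<kappa> P \<Longrightarrow> s \<ge> 0 \<Longrightarrow> t \<ge> 0 \<Longrightarrow> \<phi> \<in> Ck \<kappa> \<Longrightarrow> P s (P t \<phi>) = P (s + t) \<phi>"
  unfolding C0_semigroup_def by blast

lemma C0_equi: "C0_semigroup \<kappa> P \<Longrightarrow> T \<ge> 0 \<Longrightarrow> \<epsilon> > 0 \<Longrightarrow> admissible K a \<Longrightarrow>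
        (\<exists>C b \<delta>. admissible C b \<and> \<delta> > 0 \<and>
           (\<forall>t\<in>{0..T}. \<forall>\<phi>1\<in>Ck \<kappa>. \<forall>\<phi>2\<in>Ck \<kappa>.
              pmix \<kappa> C b (\<lambda>x. \<phi>1 x - \<phi>2 x) < \<delta> \<longrightarrow>
              pmix \<kappa> K a (\<lambda>x. P t \<phi>1 x - P t \<phi>2 x) < \<epsilon>))"
  unfolding C0_semigroup_def by blast

lemma C0_strong: "C0_semigroup \<kappa> P \<Longrightarrow> \<phi> \<in> Ck \<kappa> \<Longrightarrow> admissible K a \<Longrightarrow>
        ((\<lambda>t. pmix \<kappa> K a (\<lambda>x. P t \<phi> x - \<phi> x)) \<longlongrightarrow> 0) (at_right 0)"
  unfolding C0_semigroup_def by blast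

lemma strong_pointwise:
  assumes "C0_semigroup \<kappa> P" "weight \<kappa>" "\<phi> \<in> Ck \<kappa>"
  shows "((\<lambda>h. P h \<phi> x) \<longlongrightarrow> \<phi> x) (at_right 0)"
proof -
  have "mixed_tendsto \<kappa> (\<lambda>h. P h \<phi>) \<phi> (at_right 0)"
    unfolding mixed_tendsto_def using C0_strong[OF assms(1,3)] by blast
  then show ?thesis using pointwise[OF assms(2)] by blast
qed

lemma equi_pointwise:
  assumes C0: "C0_semigroup \<kappa> P" and w: "weight \<kappa>"
    and conv: "\<And>C b. admissible C b \<Longrightarrow> ((\<lambda>h. pmix \<kappa> C b (\<lambda>y. F h y - G h y)) \<longlongrightarrow> 0) (at_right 0)"
    and ev: "eventually (\<lambda>h. F h \<in> Ck \<kappa> \<and> G h \<in> Ck \<kappa>) (at_right 0)"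
  shows "((\<lambda>h. P h (F h) x - P h (G h) x) \<longlongrightarrow> 0) (at_right 0)"
proof (rule tendstoI)
  fix e :: real assume e: "e > 0"
  have kx: "\<kappa> x > 0" using w unfolding weight_def by blast
  obtain C b \<delta> where adm: "admissible C b" and d: "\<delta> > 0" and
    H: "\<forall>t\<in>{0..1}. \<forall>\<phi>1\<in>Ck \<kappa>. \<forall>\<phi>2\<in>Ck \<kappa>.
              pmix \<kappa> C b (\<lambda>x. \<phi>1 x - \<phi>2 x) < \<delta> \<longrightarrow>
              pmix \<kappa> (\<lambda>n. {x}) (\<lambda>n. 1 / real (Suc n)) (\<lambda>y. P t \<phi>1 y - P t \<phi>2 y) < e * \<kappa> x"
    using C0_equi[OF C0 zero_le_one mult_pos_pos[OF e kx] adm_single] by blast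
  have ev1: "eventually (\<lambda>h. pmix \<kappa> C b (\<lambda>y. F h y - G h y) < \<delta>) (at_right 0)"
    using order_tendstoD(2)[OF conv[OF adm] d] .
  have ev2: "eventually (\<lambda>h. h \<in> {0<..<1}) (at_right (0::real))"
    by (rule eventually_at_right_real) simp
  show "eventually (\<lambda>h. dist (P h (F h) x - P h (G h) x) 0 < e) (at_right 0)"
    using ev1 ev2 ev
  proof eventually_elim
    case (elim h)
    then have "pmix \<kappa> (\<lambda>n. {x}) (\<lambda>n. 1 / real (Suc n)) (\<lambda>y. P h (F h) y - P h (G h) y) < e * \<kappa> x"
      using H by auto
    then have "\<bar>\<kappa> x * (P h (F h) x - P h (G h) x)\<bar> < e * \<kappa> x" by (simp only: pmix_single)
    then have "\<kappa> x * \<bar>P h (F h) x - P h (G h) x\<bar> < \<kappa> x * e" using kx by (simp add: abs_mult mult.commute)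
    then have "\<bar>P h (F h) x - P h (G h) x\<bar> < e" using kx by simp
    then show ?case by (simp add: dist_real_def)
  qed
qed

lemma u_cont:
  fixes \<kappa> :: "'a::topological_space \<Rightarrow> real"
  assumes C0: "C0_semigroup \<kappa> P" and phi: "\<phi> \<in> Ck \<kappa>"
  shows "mixed_continuous \<kappa> (\<lambda>t. P t \<phi>)"
  unfolding mixed_continuous_def mixed_tendsto_def
proof (intro conjI allI impI)
  fix t :: real assume "t \<ge> 0" then show "P t \<phi> \<in> Ck \<kappa>" using C0_Ck[OF C0 _ phi] by blast
next
  fix t :: real and K :: "nat \<Rightarrow> 'a set" and a assume t: "t \<ge> 0" and adm: "admissible K a"
  show "((\<lambda>s. pmix \<kappa> K a (\<lambda>x. P s \<phi> x - P t \<phi> x)) \<longlongrightarrow> 0) (at t within {0..})"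
  proof (rule tendstoI)
    fix e :: real assume e: "e > 0"
    obtain C b \<delta> where adm': "admissible C b" and d: "\<delta> > 0" and
      H: "\<forall>s\<in>{0..t}. \<forall>\<phi>1\<in>Ck \<kappa>. \<forall>\<phi>2\<in>Ck \<kappa>.
              pmix \<kappa> C b (\<lambda>x. \<phi>1 x - \<phi>2 x) < \<delta> \<longrightarrow>
              pmix \<kappa> K a (\<lambda>x. P s \<phi>1 x - P s \<phi>2 x) < e"
      using C0_equi[OF C0 t e adm] by blast
    have "eventually (\<lambda>r. pmix \<kappa> C b (\<lambda>x. P r \<phi> x - \<phi> x) < \<delta>) (at_right 0)"
      using order_tendstoD(2)[OF C0_strong[OF C0 phi adm'] d] .
    then obtain r0 where r0: "r0 > 0" and R: "\<And>r. r > 0 \<Longrightarrow> r < r0 \<Longrightarrow> pmix \<kappa> C b (\<lambda>x. P r \<phi> x - \<phi> x) < \<delta>"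
      unfolding eventually_at_right_field by auto
    have Pt: "P t \<phi> \<in> Ck \<kappa>" using C0_Ck[OF C0 t phi] .
    show "eventually (\<lambda>s. dist (pmix \<kappa> K a (\<lambda>x. P s \<phi> x - P t \<phi> x)) 0 < e) (at t within {0..})"
      unfolding eventually_at
    proof (intro exI[of _ r0] conjI ballI impI)
      show "r0 > 0" by (rule r0)
      fix s :: real assume s: "s \<in> {0..}" and st: "s \<noteq> t \<and> dist s t < r0"
      have Ps: "P s \<phi> \<in> Ck \<kappa>" using C0_Ck[OF C0 _ phi] s by auto
      have nn: "0 \<le> pmix \<kappa> K a (\<lambda>x. P s \<phi> x - P t \<phi> x)"
        by (rule pmix_nonneg[OF adm Ck_bnd[OF Ck_diff[OF Ps Pt]]])
      have lt: "pmix \<kappa> K a (\<lambda>x. P s \<phi> x - P t \<phi> x) < e"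
      proof (cases "s > t")
        case True
        define r where "r = s - t"
        have r: "r > 0" "r < r0" using True st by (auto simp: r_def dist_real_def)
        have Pr: "P r \<phi> \<in> Ck \<kappa>" using C0_Ck[OF C0 _ phi] r by auto
        have "pmix \<kappa> K a (\<lambda>x. P t (P r \<phi>) x - P t \<phi> x) < e"
          using H R[OF r] Pr phi t by auto
        moreover have "P t (P r \<phi>) = P s \<phi>" using C0_semi[OF C0 t _ phi, of r] r by (simp add: r_def)
        ultimately show ?thesis by simp
      next
        case False
        then have sl: "s < t" using st by auto
        define r where "r = t - s"
        have r: "r > 0" "r < r0" using sl st by (auto simp: r_def dist_real_def)
        have Pr: "P r \<phi> \<in> Ck \<kappa>" using C0_Ck[OF C0 _ phi] r by auto
        have "s \<in> {0..t}" using s sl by auto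
        then have "pmix \<kappa> K a (\<lambda>x. P s (P r \<phi>) x - P s \<phi> x) < e"
          using H R[OF r] Pr phi by auto
        moreover have "P s (P r \<phi>) = P t \<phi>" using C0_semi[OF C0 _ _ phi, of s r] r s by (simp add: r_def)
        moreover have "pmix \<kappa> K a (\<lambda>x. P t \<phi> x - P s \<phi> x) = pmix \<kappa> K a (\<lambda>x. P s \<phi> x - P t \<phi> x)"
          by (rule pmix_cong) (simp add: abs_minus_commute right_diff_distrib)
        ultimately show ?thesis by simp
      qed
      show "dist (pmix \<kappa> K a (\<lambda>x. P s \<phi> x - P t \<phi> x)) 0 < e"
        using nn lt by (simp add: dist_real_def)
    qed
  qed
qed

lemma gen_has_gen:
  assumes w: "weight \<kappa>" and L: "gen_has \<kappa> P g L"
  shows "gen_has \<kappa> P g (gen \<kappa> P g)"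
  unfolding gen_def
proof (rule theI[of _ L])
  show "gen_has \<kappa> P g L" by (rule L)
  fix L2 assume L2: "gen_has \<kappa> P g L2"
  show "L2 = L"
  proof
    fix x
    have "((\<lambda>t. (P t g x - g x) / t) \<longlongrightarrow> L2 x) (at_right 0)"
      using pointwise[OF w, of "\<lambda>t x. (P t g x - g x) / t" L2 "at_right 0" x] L2 unfolding gen_has_def by simp
    moreover have "((\<lambda>t. (P t g x - g x) / t) \<longlongrightarrow> L x) (at_right 0)"
      using pointwise[OF w, of "\<lambda>t x. (P t g x - g x) / t" L "at_right 0" x] L unfolding gen_has_def by simp
    ultimately show "L2 x = L x" by (rule tendsto_unique[rotated]) simp
  qed
qed



lemma DQ_conv:
  assumes t: "t > 0" and der: "mixed_has_derivative \<kappa> \<psi> d t"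
  shows "mixed_tendsto \<kappa> (\<lambda>h y. (\<psi> (t - h) y - \<psi> t y) / ((t - h) - t)) d (at_right 0)"
  using mt_compose[OF _ filt[OF t], of \<kappa> "\<lambda>s y. (\<psi> s y - \<psi> t y) / (s - t)" d] der
  unfolding mixed_has_derivative_def by simp

lemma sub_part:
  fixes \<kappa> :: "'a::topological_space \<Rightarrow> real"
  assumes w: "weight \<kappa>" and C0: "C0_semigroup \<kappa> P"
    and ci: "\<forall>t\<ge>0. convex_op (Ck \<kappa>) (P t) \<and> increasing_op (Ck \<kappa>) (P t)"
    and phi: "\<phi> \<in> Ck \<kappa>"
    and t: "t > 0"
    and der: "\<forall>s>0. \<psi> s \<in> Ck \<kappa> \<and> mixed_has_derivative \<kappa> \<psi> (\<psi>' s) s"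
    and dom: "\<psi> t \<in> gen_dom \<kappa> P" and eq: "\<psi> t x = P t \<phi> x"
    and ge: "\<forall>s>0. \<forall>y. \<psi> s y \<ge> P s \<phi> y"
  shows "\<psi>' t x \<le> gen \<kappa> P (\<psi> t) x"
proof -
  define g where "g = \<psi> t"
  define d where "d = \<psi>' t"
  have g: "g \<in> Ck \<kappa>" using der t by (simp add: g_def)
  have dC: "d \<in> Ck \<kappa>" using der t unfolding d_def mixed_has_derivative_def by blast
  have DQ: "mixed_tendsto \<kappa> (\<lambda>h y. (\<psi> (t - h) y - g y) / ((t - h) - t)) d (at_right 0)"
    using DQ_conv[OF t] der t unfolding g_def d_def by blast
  obtain L0 where "gen_has \<kappa> P g L0" using dom unfolding gen_dom_def g_def by blast
  then have gh: "gen_has \<kappa> P g (gen \<kappa> P g)" by (rule gen_has_gen[OF w])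
  have E4: "((\<lambda>h. (P h g x - g x) / h) \<longlongrightarrow> gen \<kappa> P g x) (at_right 0)"
    using pointwise[OF w, of "\<lambda>h y. (P h g y - g y) / h" "gen \<kappa> P g" "at_right 0" x] gh
    unfolding gen_has_def by simp
  define fh where "fh = (\<lambda>h y. g y + (\<psi> (t - h) y - g y) / h)"
  define f where "f = (\<lambda>y. g y - d y)"
  have fC: "f \<in> Ck \<kappa>" unfolding f_def using g dC by (rule Ck_diff)
  have evt: "eventually (\<lambda>h. h \<in> {0<..<min t 1}) (at_right (0::real))"
    by (rule eventually_at_right_real) (simp add: t)
  have E1: "((\<lambda>h. P h (fh h) x - P h f x) \<longlongrightarrow> 0) (at_right 0)"
  proof (rule equi_pointwise[OF C0 w])
    fix C :: "nat \<Rightarrow> 'a set" and b assume adm: "admissible C b"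
    have "((\<lambda>h. pmix \<kappa> C b (\<lambda>y. (\<psi> (t - h) y - g y) / ((t - h) - t) - d y)) \<longlongrightarrow> 0) (at_right 0)"
      using DQ adm unfolding mixed_tendsto_def by blast
    moreover have "pmix \<kappa> C b (\<lambda>y. (\<psi> (t - h) y - g y) / ((t - h) - t) - d y) =
        pmix \<kappa> C b (\<lambda>y. fh h y - f y)" for h
    proof (rule pmix_cong)
      fix y
      have "(\<psi> (t - h) y - g y) / ((t - h) - t) - d y = - (fh h y - f y)"
        unfolding fh_def f_def by (simp add: divide_minus_right)
      then show "\<bar>\<kappa> y * ((\<psi> (t - h) y - g y) / ((t - h) - t) - d y)\<bar> = \<bar>\<kappa> y * (fh h y - f y)\<bar>"
        by (simp only: mult_minus_right abs_minus_cancel)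
    qed
    ultimately show "((\<lambda>h. pmix \<kappa> C b (\<lambda>y. fh h y - f y)) \<longlongrightarrow> 0) (at_right 0)" by simp
  next
    show "eventually (\<lambda>h. fh h \<in> Ck \<kappa> \<and> f \<in> Ck \<kappa>) (at_right 0)"
      using evt
    proof eventually_elim
      case (elim h)
      then have "\<psi> (t - h) \<in> Ck \<kappa>" using der by auto
      then have "fh h \<in> Ck \<kappa>" unfolding fh_def by (intro Ck_add Ck_divide Ck_diff g)
      then show ?case using fC by blast
    qed
  qed
  have E2: "((\<lambda>h. P h f x) \<longlongrightarrow> f x) (at_right 0)" by (rule strong_pointwise[OF C0 w fC])
  have E3: "((\<lambda>h. P h g x) \<longlongrightarrow> g x) (at_right 0)" by (rule strong_pointwise[OF C0 w g])
  have lim: "((\<lambda>h. (P h (fh h) x - P h f x) + P h f x - P h g x + (P h g x - g x) / h)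
      \<longlongrightarrow> 0 + f x - g x + gen \<kappa> P g x) (at_right 0)"
    by (intro tendsto_intros E1 E2 E3 E4)
  have ineq: "eventually (\<lambda>h. 0 \<le> (P h (fh h) x - P h f x) + P h f x - P h g x + (P h g x - g x) / h) (at_right 0)"
    using evt
  proof eventually_elim
    case (elim h)
    then have h: "h > 0" "h < 1" "h < t" by auto
    have pth: "\<psi> (t - h) \<in> Ck \<kappa>" using der h by auto
    have fhC: "fh h \<in> Ck \<kappa>" unfolding fh_def using pth by (intro Ck_add Ck_divide Ck_diff g)
    have Pth: "P (t - h) \<phi> \<in> Ck \<kappa>" using C0_Ck[OF C0 _ phi] h by auto
    have s1: "P h (P (t - h) \<phi>) = P t \<phi>" using C0_semi[OF C0 _ _ phi, of h "t - h"] h by simp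
    have inc: "increasing_op (Ck \<kappa>) (P h)" and cvx: "convex_op (Ck \<kappa>) (P h)" using ci h by auto
    have "P h (P (t - h) \<phi>) x \<le> P h (\<psi> (t - h)) x"
      using inc Pth pth ge h unfolding increasing_op_def by auto
    then have a1: "g x \<le> P h (\<psi> (t - h)) x" using s1 eq by (simp add: g_def)
    have comb: "(\<lambda>y. h * fh h y + (1 - h) * g y) = \<psi> (t - h)"
      using h unfolding fh_def by (auto simp: field_simps)
    have "P h (\<lambda>y. h * fh h y + (1 - h) * g y) x \<le> h * P h (fh h) x + (1 - h) * P h g x"
      using cvx fhC g h unfolding convex_op_def by auto
    then have a2: "g x \<le> h * P h (fh h) x + (1 - h) * P h g x" using a1 comb by simp
    have "(P h g x - P h (fh h) x) * h \<le> P h g x - g x"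
      using a2 by (simp add: algebra_simps)
    then have "P h g x - P h (fh h) x \<le> (P h g x - g x) / h"
      using h by (simp add: pos_le_divide_eq)
    then show ?case by simp
  qed
  have "0 \<le> 0 + f x - g x + gen \<kappa> P g x"
    by (rule tendsto_lowerbound[OF lim ineq]) simp
  then show ?thesis unfolding f_def g_def d_def by simp
qed


lemma super_part:
  fixes \<kappa> :: "'a::topological_space \<Rightarrow> real"
  assumes w: "weight \<kappa>" and C0: "C0_semigroup \<kappa> P"
    and ci: "\<forall>t\<ge>0. convex_op (Ck \<kappa>) (P t) \<and> increasing_op (Ck \<kappa>) (P t)"
    and phi: "\<phi> \<in> Ck \<kappa>"
    and t: "t > 0"
    and der: "\<forall>s>0. \<psi> s \<in> Ck \<kappa> \<and> mixed_has_derivative \<kappa> \<psi> (\<psi>' s) s"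
    and dom: "\<psi> t \<in> gen_dom \<kappa> P" and eq: "\<psi> t x = P t \<phi> x"
    and le: "\<forall>s>0. \<forall>y. \<psi> s y \<le> P s \<phi> y"
  shows "\<psi>' t x \<ge> gen \<kappa> P (\<psi> t) x"
proof -
  define g where "g = \<psi> t"
  define d where "d = \<psi>' t"
  have g: "g \<in> Ck \<kappa>" using der t by (simp add: g_def)
  have dC: "d \<in> Ck \<kappa>" using der t unfolding d_def mixed_has_derivative_def by blast
  have DQ: "mixed_tendsto \<kappa> (\<lambda>h y. (\<psi> (t - h) y - g y) / ((t - h) - t)) d (at_right 0)"
    using DQ_conv[OF t] der t unfolding g_def d_def by blast
  obtain L0 where "gen_has \<kappa> P g L0" using dom unfolding gen_dom_def g_def by blast
  then have gh: "gen_has \<kappa> P g (gen \<kappa> P g)" by (rule gen_has_gen[OF w])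
  have E5: "((\<lambda>h. (P h g x - g x) / h) \<longlongrightarrow> gen \<kappa> P g x) (at_right 0)"
    using pointwise[OF w, of "\<lambda>h y. (P h g y - g y) / h" "gen \<kappa> P g" "at_right 0" x] gh
    unfolding gen_has_def by simp
  define q where "q = (\<lambda>h y. (\<psi> (t - h) y - g y) / ((t - h) - t))"
  define kh where "kh = (\<lambda>h y. \<psi> (t - h) y + (g y - \<psi> (t - h) y) / h)"
  define e where "e = (\<lambda>y. g y + d y)"
  have eC: "e \<in> Ck \<kappa>" unfolding e_def using g dC by (rule Ck_add)
  have evt: "eventually (\<lambda>h. h \<in> {0<..<min t 1}) (at_right (0::real))"
    by (rule eventually_at_right_real) (simp add: t)
  have pthC: "eventually (\<lambda>h. \<psi> (t - h) \<in> Ck \<kappa>) (at_right 0)"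
    using evt by eventually_elim (use der in auto)
  have qC: "eventually (\<lambda>h. q h \<in> Ck \<kappa>) (at_right 0)"
    using pthC by eventually_elim (unfold q_def, intro Ck_divide Ck_diff g)
  have khC: "eventually (\<lambda>h. kh h \<in> Ck \<kappa>) (at_right 0)"
    using pthC by eventually_elim (unfold kh_def, intro Ck_add Ck_divide Ck_diff g)
  have M0: "((\<lambda>h. pmix \<kappa> C b (\<lambda>y. q h y - d y)) \<longlongrightarrow> 0) (at_right 0)" if adm: "admissible C b" for C :: "nat \<Rightarrow> 'a set" and b
    using DQ adm unfolding mixed_tendsto_def q_def by blast
  have M1: "((\<lambda>h. pmix \<kappa> C b (\<lambda>y. \<psi> (t - h) y - g y)) \<longlongrightarrow> 0) (at_right 0)"
    if adm: "admissible C b" for C :: "nat \<Rightarrow> 'a set" and b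
  proof (rule tendsto_sandwich[of "\<lambda>h. 0" _ _ "\<lambda>h. \<bar>h\<bar> * (pmix \<kappa> C b (\<lambda>y. q h y - d y) + pmix \<kappa> C b d)"])
    show "eventually (\<lambda>h. 0 \<le> pmix \<kappa> C b (\<lambda>y. \<psi> (t - h) y - g y)) (at_right 0)"
      using pthC by eventually_elim (rule pmix_nonneg[OF adm Ck_bnd[OF Ck_diff[OF _ g]]])
    show "eventually (\<lambda>h. pmix \<kappa> C b (\<lambda>y. \<psi> (t - h) y - g y)
        \<le> \<bar>h\<bar> * (pmix \<kappa> C b (\<lambda>y. q h y - d y) + pmix \<kappa> C b d)) (at_right 0)"
      using evt qC
    proof eventually_elim
      case (elim h)
      then have h: "h \<noteq> 0" by auto
      have qq: "(\<lambda>y. \<psi> (t - h) y - g y) = (\<lambda>y. (- h) * q h y)"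
        using h unfolding q_def by (auto simp: field_simps)
      have "pmix \<kappa> C b (\<lambda>y. (- h) * q h y) \<le> \<bar>- h\<bar> * pmix \<kappa> C b (q h)"
        by (rule pmix_cmult[OF adm Ck_bnd]) (use elim in auto)
      moreover have "pmix \<kappa> C b (q h) \<le> pmix \<kappa> C b (\<lambda>y. q h y - d y) + pmix \<kappa> C b d"
      proof -
        have "pmix \<kappa> C b (\<lambda>y. (q h y - d y) + d y) \<le> pmix \<kappa> C b (\<lambda>y. q h y - d y) + pmix \<kappa> C b d"
          by (rule pmix_triangle[OF adm Ck_bnd Ck_bnd]) (use elim dC in \<open>auto intro: Ck_diff\<close>)
        then show ?thesis by simp
      qed
      ultimately show ?case unfolding qq by (simp add: mult_left_mono order_trans)
    qed
    have "((\<lambda>h. \<bar>h\<bar> * (pmix \<kappa> C b (\<lambda>y. q h y - d y) + pmix \<kappa> C b d)) \<longlongrightarrow> \<bar>0\<bar> * (0 + pmix \<kappa> C b d)) (at_right 0)"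
      by (intro tendsto_intros M0[OF adm])
    then show "((\<lambda>h. \<bar>h\<bar> * (pmix \<kappa> C b (\<lambda>y. q h y - d y) + pmix \<kappa> C b d)) \<longlongrightarrow> 0) (at_right 0)" by simp
  qed simp
  have M2: "((\<lambda>h. pmix \<kappa> C b (\<lambda>y. kh h y - e y)) \<longlongrightarrow> 0) (at_right 0)"
    if adm: "admissible C b" for C :: "nat \<Rightarrow> 'a set" and b
  proof (rule tendsto_sandwich[of "\<lambda>h. 0" _ _ "\<lambda>h. pmix \<kappa> C b (\<lambda>y. \<psi> (t - h) y - g y) + pmix \<kappa> C b (\<lambda>y. q h y - d y)"])
    show "eventually (\<lambda>h. 0 \<le> pmix \<kappa> C b (\<lambda>y. kh h y - e y)) (at_right 0)"
      using khC by eventually_elim (rule pmix_nonneg[OF adm Ck_bnd[OF Ck_diff[OF _ eC]]])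
    show "eventually (\<lambda>h. pmix \<kappa> C b (\<lambda>y. kh h y - e y)
        \<le> pmix \<kappa> C b (\<lambda>y. \<psi> (t - h) y - g y) + pmix \<kappa> C b (\<lambda>y. q h y - d y)) (at_right 0)"
      using evt qC pthC
    proof eventually_elim
      case (elim h)
      then have h: "h \<noteq> 0" by auto
      have kk: "(\<lambda>y. kh h y - e y) = (\<lambda>y. (\<psi> (t - h) y - g y) + (q h y - d y))"
        using h unfolding kh_def e_def q_def by (auto simp: field_simps)
      show ?case unfolding kk
        by (rule pmix_triangle[OF adm Ck_bnd Ck_bnd]) (use elim dC g in \<open>auto intro: Ck_diff\<close>)
    qed
    have "((\<lambda>h. pmix \<kappa> C b (\<lambda>y. \<psi> (t - h) y - g y) + pmix \<kappa> C b (\<lambda>y. q h y - d y)) \<longlongrightarrow> 0 + 0) (at_right 0)"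
      by (intro tendsto_intros M0[OF adm] M1[OF adm])
    then show "((\<lambda>h. pmix \<kappa> C b (\<lambda>y. \<psi> (t - h) y - g y) + pmix \<kappa> C b (\<lambda>y. q h y - d y)) \<longlongrightarrow> 0) (at_right 0)"
      by simp
  qed simp
  have E1: "((\<lambda>h. P h (kh h) x - P h e x) \<longlongrightarrow> 0) (at_right 0)"
    by (rule equi_pointwise[OF C0 w M2]) (use khC eC in \<open>auto elim: eventually_mono\<close>)
  have E3: "((\<lambda>h. P h (\<psi> (t - h)) x - P h g x) \<longlongrightarrow> 0) (at_right 0)"
    by (rule equi_pointwise[OF C0 w M1]) (use pthC g in \<open>auto elim: eventually_mono\<close>)
  have E2: "((\<lambda>h. P h e x) \<longlongrightarrow> e x) (at_right 0)" by (rule strong_pointwise[OF C0 w eC])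
  have E4: "((\<lambda>h. P h g x) \<longlongrightarrow> g x) (at_right 0)" by (rule strong_pointwise[OF C0 w g])
  have lim: "((\<lambda>h. (P h (kh h) x - P h e x) + P h e x - (P h (\<psi> (t - h)) x - P h g x) - P h g x)
      \<longlongrightarrow> 0 + e x - 0 - g x) (at_right 0)"
    by (intro tendsto_intros E1 E2 E3 E4)
  have ineq: "eventually (\<lambda>h. (P h g x - g x) / h \<le>
      (P h (kh h) x - P h e x) + P h e x - (P h (\<psi> (t - h)) x - P h g x) - P h g x) (at_right 0)"
    using evt khC
  proof eventually_elim
    case (elim h)
    then have h: "h > 0" "h < 1" "h < t" by auto
    have pth: "\<psi> (t - h) \<in> Ck \<kappa>" using der h by auto
    have khhC: "kh h \<in> Ck \<kappa>" using elim by blast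
    have Pth: "P (t - h) \<phi> \<in> Ck \<kappa>" using C0_Ck[OF C0 _ phi] h by auto
    have s1: "P h (P (t - h) \<phi>) = P t \<phi>" using C0_semi[OF C0 _ _ phi, of h "t - h"] h by simp
    have inc: "increasing_op (Ck \<kappa>) (P h)" and cvx: "convex_op (Ck \<kappa>) (P h)" using ci h by auto
    have "P h (\<psi> (t - h)) x \<le> P h (P (t - h) \<phi>) x"
      using inc Pth pth le h unfolding increasing_op_def by auto
    then have a1: "P h (\<psi> (t - h)) x \<le> g x" using s1 eq by (simp add: g_def)
    have comb: "(\<lambda>y. h * kh h y + (1 - h) * \<psi> (t - h) y) = g"
      using h unfolding kh_def by (auto simp: field_simps)
    have "P h (\<lambda>y. h * kh h y + (1 - h) * \<psi> (t - h) y) x \<le> h * P h (kh h) x + (1 - h) * P h (\<psi> (t - h)) x"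
      using cvx khhC pth h unfolding convex_op_def by auto
    then have a2: "P h g x \<le> h * P h (kh h) x + (1 - h) * P h (\<psi> (t - h)) x" using comb by simp
    have "P h g x - g x \<le> (P h (kh h) x - P h (\<psi> (t - h)) x) * h"
      using a1 a2 by (simp add: algebra_simps)
    then have "(P h g x - g x) / h \<le> P h (kh h) x - P h (\<psi> (t - h)) x"
      using h by (simp add: pos_divide_le_eq)
    then show ?case by simp
  qed
  have "gen \<kappa> P g x \<le> 0 + e x - 0 - g x"
    by (rule tendsto_le[OF _ lim E5 ineq]) simp
  then show ?thesis unfolding e_def g_def d_def by simp
qed


theorem theorem6p2:
  fixes \<kappa> :: "'a::topological_space \<Rightarrow> real"
    and P :: "real \<Rightarrow> ('a \<Rightarrow> real) \<Rightarrow> ('a \<Rightarrow> real)"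
    and \<phi> :: "'a \<Rightarrow> real"
  assumes "standing_space TYPE('a)"
    and "weight \<kappa>"
    and "C0_semigroup \<kappa> P"
    and "\<forall>t\<ge>0. convex_op (Ck \<kappa>) (P t) \<and> increasing_op (Ck \<kappa>) (P t)"
    and "\<phi> \<in> Ck \<kappa>"
  shows "visc_sol \<kappa> (gen_dom \<kappa> P) (gen \<kappa> P) (\<lambda>t. P t \<phi>) \<and> P 0 \<phi> = \<phi>"
proof -
  have uc: "mixed_continuous \<kappa> (\<lambda>t. P t \<phi>)" by (rule u_cont[OF assms(3,5)])
  have "visc_sub \<kappa> (gen_dom \<kappa> P) (gen \<kappa> P) (\<lambda>t. P t \<phi>)"
    unfolding visc_sub_def using uc sub_part[OF assms(2-5)] by blast
  moreover have "visc_super \<kappa> (gen_dom \<kappa> P) (gen \<kappa> P) (\<lambda>t. P t \<phi>)"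
    unfolding visc_super_def using uc super_part[OF assms(2-5)] by blast
  moreover have "P 0 \<phi> = \<phi>" using assms(3,5) unfolding C0_semigroup_def by blast
  ultimately show ?thesis unfolding visc_sol_def by blast
qed

end
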